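(* Consider finitely many tanks, each colored red or blue, with arbitrary real initial water levels $x_a$. Arrange the tanks in a row in order of decreasing initial water level, breaking ties so that among tanks of equal level, all blue tanks are placed to the left of all red tanks. Consider any execution of the following procedure: while some red tank is positioned (anywhere) to the left of some blue tank in the row, choose any red tank $a$ immediately to the left of (i.e. adjacent to) a blue tank $b$, equilibrate $a$ and $b$, and then swap the positions of $a$ and $b$ in the row. Then this procedure terminates, and the total amount of water in the blue tanks at the end is at least as large as the total amount of water in the blue tanks at the end of any other finite sequence of pairwise equilibrations applied to the same initial configuration.
   Context: Equilibrating two tanks $a \neq b$ with water levels $x_a, x_b$ replaces both levels by $\frac{x_a+x_b}{2}$ and leaves all other tanks unchanged. A strategy is a finite sequence of pairs of distinct tanks, executed as the corresponding equilibrations; "transferring more water from the red tanks to the blue tanks" means ending with a larger total amount of water in the blue tanks. *)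

theory Defs
  imports Complex_Main
begin

definition equil :: "'a \<Rightarrow> 'a \<Rightarrow> ('a \<Rightarrow> real) \<Rightarrow> ('a \<Rightarrow> real)" where
  "equil a b x = x(a := (x a + x b) / 2, b := (x a + x b) / 2)"

definition run_strategy :: "('a \<times> 'a) list \<Rightarrow> ('a \<Rightarrow> real) \<Rightarrow> ('a \<Rightarrow> real)" where
  "run_strategy s x = fold (\<lambda>(a, b) y. equil a b y) s x"

definition valid_strategy :: "('a \<times> 'a) list \<Rightarrow> bool" where
  "valid_strategy s \<longleftrightarrow> (\<forall>(a, b) \<in> set s. a \<noteq> b)"

definition blue_total :: "('a \<Rightarrow> bool) \<Rightarrow> ('a \<Rightarrow> real) \<Rightarrow> real" where
  "blue_total blue x = (\<Sum>a\<in>{a. blue a}. x a)"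

definition initial_row :: "('a \<Rightarrow> bool) \<Rightarrow> ('a \<Rightarrow> real) \<Rightarrow> 'a list \<Rightarrow> bool" where
  "initial_row blue x r \<longleftrightarrow> distinct r \<and> set r = UNIV \<and>
     sorted_wrt (\<lambda>a b. x a > x b \<or> (x a = x b \<and> (blue a \<or> \<not> blue b))) r"

definition red_left_of_blue :: "('a \<Rightarrow> bool) \<Rightarrow> 'a list \<Rightarrow> bool" where
  "red_left_of_blue blue r \<longleftrightarrow> (\<exists>i j. i < j \<and> j < length r \<and> \<not> blue (r ! i) \<and> blue (r ! j))"

definition proc_step :: "('a \<Rightarrow> bool) \<Rightarrow> ('a list \<times> ('a \<Rightarrow> real)) \<Rightarrow> ('a list \<times> ('a \<Rightarrow> real)) \<Rightarrow> bool" where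
  "proc_step blue s s' \<longleftrightarrow> red_left_of_blue blue (fst s) \<and>
     (\<exists>i. Suc i < length (fst s) \<and> \<not> blue (fst s ! i) \<and> blue (fst s ! Suc i) \<and>
        snd s' = equil (fst s ! i) (fst s ! Suc i) (snd s) \<and>
        fst s' = (fst s)[i := fst s ! Suc i, Suc i := fst s ! i])"

end

theory Submission
  imports Defs
begin

fun G :: "nat \<Rightarrow> nat \<Rightarrow> real" where
  "G 0 q = 0"
| "G (Suc p) 0 = 0"
| "G (Suc p) (Suc q) = (1 + G p (Suc q) + G (Suc p) q) / 2"

lemma G_p0[simp]: "G p 0 = 0" by (cases p) auto

lemma G_nonneg: "0 \<le> G p q"
  by (induction p q rule: G.induct) auto

lemma G_1q: "G (Suc 0) q \<le> 1"
  by (induction q) auto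

lemma G_p1: "G p (Suc 0) \<le> 1"
  by (induction p) auto

lemma G_diag_aux: "p + q = n \<Longrightarrow> G (Suc p) (Suc q) \<le> 1 + G p q"
proof (induction n arbitrary: p q rule: less_induct)
  case (less n)
  show ?case
  proof (cases p)
    case 0
    then show ?thesis using G_1q[of q] by simp
  next
    case (Suc p')
    show ?thesis
    proof (cases q)
      case 0
      then show ?thesis using G_p1[of "p"] Suc by simp
    next
      case (Suc q')
      have i1: "G p (Suc q) \<le> 1 + G p' q" using less.IH[of "p' + q" p' q] less.prems \<open>p = Suc p'\<close> by simp
      have i2: "G (Suc p) q \<le> 1 + G p q'" using less.IH[of "p + q'" p q'] less.prems Suc by simp
      have e: "G p q = (1 + G p' q + G p q') / 2" using Suc \<open>p = Suc p'\<close> by simp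
      have "G (Suc p) (Suc q) = (1 + G p (Suc q) + G (Suc p) q) / 2" by simp
      moreover have "\<And>A B C D E F::real. A = (1+B+C)/2 \<Longrightarrow> B \<le> 1 + D \<Longrightarrow> C \<le> 1 + E \<Longrightarrow> F = (1 + D + E)/2 \<Longrightarrow> A \<le> 1 + F" by (simp add: field_simps)
      ultimately show ?thesis using i1 i2 e by blast
    qed
  qed
qed

lemma G_diag: "G (Suc p) (Suc q) \<le> 1 + G p q"
  using G_diag_aux by blast

lemma G_L: "G (Suc p) q + G p (Suc q) \<le> 1 + 2 * G p q"
  using G_diag[of p q] by simp


definition nb :: "('a::finite \<Rightarrow> bool) \<Rightarrow> 'a set \<Rightarrow> nat" where
  "nb bl T = card {z\<in>T. bl z}"
definition nr :: "('a::finite \<Rightarrow> bool) \<Rightarrow> 'a set \<Rightarrow> nat" where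
  "nr bl T = card {z\<in>T. \<not> bl z}"
definition HH :: "('a::finite \<Rightarrow> bool) \<Rightarrow> 'a set \<Rightarrow> real" where
  "HH bl T = real (nb bl T) + G (nr bl T) (nb bl UNIV - nb bl T)"

lemma nb_ins_blue: "bl a \<Longrightarrow> a \<notin> T \<Longrightarrow> nb bl (insert a T) = Suc (nb bl T)"
proof -
  assume "bl a" "a \<notin> T"
  then have "{z\<in>insert a T. bl z} = insert a {z\<in>T. bl z}" by auto
  then show ?thesis unfolding nb_def using \<open>a \<notin> T\<close> by simp
qed
lemma nb_ins_red: "\<not> bl a \<Longrightarrow> nb bl (insert a T) = nb bl T"
proof -
  assume "\<not> bl a"
  then have "{z\<in>insert a T. bl z} = {z\<in>T. bl z}" by auto
  then show ?thesis unfolding nb_def by simp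
qed
lemma nr_ins_red: "\<not> bl a \<Longrightarrow> a \<notin> T \<Longrightarrow> nr bl (insert a T) = Suc (nr bl T)"
proof -
  assume "\<not> bl a" "a \<notin> T"
  then have "{z\<in>insert a T. \<not> bl z} = insert a {z\<in>T. \<not> bl z}" by auto
  then show ?thesis unfolding nr_def using \<open>a \<notin> T\<close> by simp
qed
lemma nr_ins_blue: "bl a \<Longrightarrow> nr bl (insert a T) = nr bl T"
proof -
  assume "bl a"
  then have "{z\<in>insert a T. \<not> bl z} = {z\<in>T. \<not> bl z}" by auto
  then show ?thesis unfolding nr_def by simp
qed
lemma nb_lt: "bl b \<Longrightarrow> b \<notin> T \<Longrightarrow> nb bl T < nb bl UNIV"
  unfolding nb_def by (rule psubset_card_mono) auto
lemma nb_le: "nb bl T \<le> nb bl UNIV"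
  unfolding nb_def by (rule card_mono) auto

lemma HH_swap:
  assumes "\<not> bl a" "bl b" "a \<notin> Z" "b \<notin> Z"
  shows "2 * HH bl (insert a Z) = HH bl Z + HH bl (insert b (insert a Z))"
proof -
  have ab: "a \<noteq> b" using assms by auto
  obtain q' where q: "nb bl UNIV - nb bl Z = Suc q'" using nb_lt[of bl b Z] assms
    by (metis Suc_diff_Suc)
  have q2: "nb bl UNIV - Suc (nb bl Z) = q'" using q by simp
  have e1: "HH bl (insert a Z) = nb bl Z + G (Suc (nr bl Z)) (Suc q')"
    unfolding HH_def using assms q by (simp add: nb_ins_red nr_ins_red)
  have e2: "HH bl (insert b (insert a Z)) = Suc (nb bl Z) + G (Suc (nr bl Z)) q'"
    unfolding HH_def using assms q2 ab by (simp add: nb_ins_red nr_ins_red nb_ins_blue nr_ins_blue)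
  have e0: "HH bl Z = nb bl Z + G (nr bl Z) (Suc q')"
    unfolding HH_def using q by simp
  show ?thesis using e0 e1 e2 by simp
qed

lemma HH_bluered:
  assumes "bl u" "\<not> bl v" "u \<notin> Z" "v \<notin> Z"
  shows "HH bl (insert v (insert u Z)) + HH bl Z \<le> 2 * HH bl (insert u Z)"
proof -
  have uv: "u \<noteq> v" using assms by auto
  obtain q where q: "nb bl UNIV - nb bl Z = Suc q" using nb_lt[of bl u Z] assms
    by (metis Suc_diff_Suc)
  have q2: "nb bl UNIV - Suc (nb bl Z) = q" using q by simp
  have e1: "HH bl (insert u Z) = Suc (nb bl Z) + G (nr bl Z) q"
    unfolding HH_def using assms q2 by (simp add: nb_ins_blue nr_ins_blue)
  have e2: "HH bl (insert v (insert u Z)) = Suc (nb bl Z) + G (Suc (nr bl Z)) q"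
    unfolding HH_def using assms q2 uv by (simp add: nb_ins_red nr_ins_red nb_ins_blue nr_ins_blue)
  have e0: "HH bl Z = nb bl Z + G (nr bl Z) (Suc q)"
    unfolding HH_def using q by simp
  show ?thesis using e0 e1 e2 G_L[of "nr bl Z" q] by simp
qed

lemma HH_same:
  assumes "bl u = bl v" "u \<notin> Z" "v \<notin> Z"
  shows "HH bl (insert v Z) = HH bl (insert u Z)"
  unfolding HH_def using assms
  by (cases "bl u") (simp_all add: nb_ins_red nr_ins_red nb_ins_blue nr_ins_blue)

lemma HH_empty: "HH bl {} = 0"
  unfolding HH_def nb_def nr_def by simp

lemma HH_UNIV: "HH bl UNIV = nb bl UNIV"
  unfolding HH_def by simp

lemma run_Nil[simp]: "run_strategy [] y = y"
  unfolding run_strategy_def by simp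
lemma run_Cons[simp]: "run_strategy ((i,j)#s) y = run_strategy s (equil i j y)"
  unfolding run_strategy_def by simp

lemma equil_lin: "equil i j (\<lambda>a. c * y a + d * z a) = (\<lambda>a. c * equil i j y a + d * equil i j z a)"
  unfolding equil_def by (auto simp: fun_eq_iff field_simps)

lemma run_lin: "run_strategy s (\<lambda>a. c * y a + d * z a) = (\<lambda>a. c * run_strategy s y a + d * run_strategy s z a)"
proof (induction s arbitrary: y z)
  case Nil
  then show ?case by simp
next
  case (Cons p s)
  obtain i j where p: "p = (i,j)" by (cases p)
  show ?case unfolding p run_Cons equil_lin Cons.IH by simp
qed

lemma run_const: "run_strategy s (\<lambda>a. k) = (\<lambda>a. k)"
proof (induction s)
  case Nil
  then show ?case by simp
next
  case (Cons p s)
  obtain i j where p: "p = (i,j)" by (cases p)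
  have "equil i j (\<lambda>a. k) = (\<lambda>a. k)" unfolding equil_def by auto
  then show ?case unfolding p run_Cons using Cons.IH by simp
qed


definition ind :: "'a set \<Rightarrow> 'a \<Rightarrow> real" where
  "ind S a = (if a \<in> S then 1 else 0)"

lemma bt_avg: "blue_total bl (run_strategy s (\<lambda>a. (y a + z a) / 2))
   = (blue_total bl (run_strategy s y) + blue_total bl (run_strategy s z)) / 2"
proof -
  have "(\<lambda>a. (y a + z a) / 2) = (\<lambda>a. (1/2) * y a + (1/2) * z a)" by (auto simp: fun_eq_iff)
  then show ?thesis unfolding blue_total_def using run_lin[of s "1/2" y "1/2" z]
    by (simp add: sum.distrib flip: sum_divide_distrib)
qed

lemma equil_sym: "equil i j = equil j i"
  unfolding equil_def by (auto simp: fun_eq_iff)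

lemma bt_ind: "blue_total bl (ind S) = real (nb bl S)"
proof -
  have "blue_total bl (ind S) = (\<Sum>a\<in>{a. bl a}. if a \<in> S then 1 else 0)"
    unfolding blue_total_def ind_def by simp
  also have "\<dots> = (\<Sum>a\<in>{a\<in>{a. bl a}. a \<in> S}. 1)"
    by (subst sum.inter_filter) auto
  also have "{a\<in>{a. bl a}. a \<in> S} = {z\<in>S. bl z}" by auto
  finally show ?thesis unfolding nb_def by simp
qed

lemma HH_ge_nb: "real (nb bl S) \<le> HH bl S"
  unfolding HH_def using G_nonneg by simp

lemma strat_bound:
  "valid_strategy s \<Longrightarrow> blue_total bl (run_strategy s (ind S)) \<le> HH bl S"
proof (induction s arbitrary: S)
  case Nil
  then show ?case using bt_ind[of bl S] HH_ge_nb[of bl S] by simp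
next
  case (Cons p s)
  obtain i j where p: "p = (i,j)" by (cases p)
  have ij: "i \<noteq> j" and vs: "valid_strategy s" using Cons.prems unfolding p valid_strategy_def by auto
  have key: "blue_total bl (run_strategy s (equil u v (ind S))) \<le> HH bl S"
    if uS: "u \<in> S" and vS: "v \<notin> S" for u v
  proof -
    define S0 where "S0 = S - {u}"
    have S: "S = insert u S0" and u0: "u \<notin> S0" and v0: "v \<notin> S0"
      using uS vS unfolding S0_def by auto
    show ?thesis
    proof (cases "bl u = bl v")
      case True
      have "equil u v (ind S) = (\<lambda>a. (ind S a + ind (insert v S0) a) / 2)"
        using uS vS unfolding equil_def ind_def S0_def by (auto simp: fun_eq_iff)
      then have "blue_total bl (run_strategy s (equil u v (ind S)))
          = (blue_total bl (run_strategy s (ind S)) + blue_total bl (run_strategy s (ind (insert v S0)))) / 2"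
        using bt_avg by simp
      also have "\<dots> \<le> (HH bl S + HH bl (insert v S0)) / 2"
        using Cons.IH[OF vs, of S] Cons.IH[OF vs, of "insert v S0"] by simp
      also have "\<dots> = HH bl S" using HH_same[OF True u0 v0] S by simp
      finally show ?thesis .
    next
      case False
      have "equil u v (ind S) = (\<lambda>a. (ind (insert v S) a + ind S0 a) / 2)"
        using uS vS unfolding equil_def ind_def S0_def by (auto simp: fun_eq_iff)
      then have "blue_total bl (run_strategy s (equil u v (ind S)))
          = (blue_total bl (run_strategy s (ind (insert v S))) + blue_total bl (run_strategy s (ind S0))) / 2"
        using bt_avg by simp
      also have "\<dots> \<le> (HH bl (insert v S) + HH bl S0) / 2"
        using Cons.IH[OF vs, of "insert v S"] Cons.IH[OF vs, of S0] by simp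
      also have "\<dots> \<le> HH bl S"
      proof (cases "bl u")
        case True
        then have "\<not> bl v" using False by simp
        from HH_bluered[OF True this u0 v0] S show ?thesis by simp
      next
        case f: False
        then have "bl v" using False by simp
        from HH_swap[OF f this u0 v0] S show ?thesis by simp
      qed
      finally show ?thesis .
    qed
  qed
  show ?case
  proof (cases "(i \<in> S) = (j \<in> S)")
    case True
    then have "equil i j (ind S) = ind S" unfolding equil_def ind_def by (auto simp: fun_eq_iff)
    then show ?thesis unfolding p run_Cons using Cons.IH[OF vs] by simp
  next
    case False
    then show ?thesis unfolding p run_Cons using key[of i j] key[of j i] equil_sym by metis
  qed
qed


lemma run_sum: "finite F \<Longrightarrow>
  run_strategy s (\<lambda>a. \<Sum>b\<in>F. g b a) = (\<lambda>a. \<Sum>b\<in>F. run_strategy s (g b) a)"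
proof (induction F rule: finite_induct)
  case empty
  then show ?case using run_const[of s 0] by simp
next
  case (insert b F)
  have "(\<lambda>a. \<Sum>c\<in>insert b F. g c a) = (\<lambda>a. 1 * g b a + 1 * (\<Sum>c\<in>F. g c a))"
    using insert by simp
  then have "run_strategy s (\<lambda>a. \<Sum>c\<in>insert b F. g c a)
     = (\<lambda>a. 1 * run_strategy s (g b) a + 1 * run_strategy s (\<lambda>a. \<Sum>c\<in>F. g c a) a)"
    using run_lin by metis
  then show ?case using insert by simp
qed

lemma run_scale: "run_strategy s (\<lambda>a. c * y a) = (\<lambda>a. c * run_strategy s y a)"
  using run_lin[of s c y 0 y] by simp

lemma bt_sum: "finite F \<Longrightarrow>
  blue_total bl (run_strategy s (\<lambda>a. \<Sum>b\<in>F. g b a)) = (\<Sum>b\<in>F. blue_total bl (run_strategy s (g b)))"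
  unfolding blue_total_def by (simp add: run_sum sum.swap[of _ F])

lemma bt_decomp:
  fixes x :: "'a::finite \<Rightarrow> real"
  shows "blue_total bl (run_strategy s x) = (\<Sum>b\<in>UNIV. x b * blue_total bl (run_strategy s (ind {b})))"
proof -
  have "x = (\<lambda>a. \<Sum>b\<in>UNIV. x b * ind {b} a)"
    unfolding ind_def by (auto simp: fun_eq_iff if_distrib cong: if_cong)
  then have "blue_total bl (run_strategy s x) = (\<Sum>b\<in>UNIV. blue_total bl (run_strategy s (\<lambda>a. x b * ind {b} a)))"
    using bt_sum[of UNIV bl s "\<lambda>b a. x b * ind {b} a"] by simp
  also have "\<dots> = (\<Sum>b\<in>UNIV. x b * blue_total bl (run_strategy s (ind {b})))"
    unfolding run_scale blue_total_def by (simp add: sum_distrib_left)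
  finally show ?thesis .
qed

lemma bt_ind_sum:
  fixes T :: "'a::finite set"
  shows "blue_total bl (run_strategy s (ind T)) = (\<Sum>b\<in>T. blue_total bl (run_strategy s (ind {b})))"
proof -
  have "ind T = (\<lambda>a. \<Sum>b\<in>T. ind {b} a)"
    unfolding ind_def by (auto simp: fun_eq_iff)
  then show ?thesis using bt_sum[of T bl s "\<lambda>b. ind {b}"] by simp
qed

lemma sum_idx: "distinct r \<Longrightarrow> (\<Sum>b\<in>set r. f b) = (\<Sum>k<length r. f (r ! k))"
  using sum.reindex_bij_betw[OF bij_betw_nth[of r "{..<length r}" "set r"], of f] by simp

fun Qf :: "('a::finite \<Rightarrow> bool) \<Rightarrow> ('a \<Rightarrow> real) \<Rightarrow> 'a set \<Rightarrow> 'a list \<Rightarrow> real" where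
  "Qf bl y X [] = 0"
| "Qf bl y X (a # r) = y a * (HH bl (insert a X) - HH bl X) + Qf bl y (insert a X) r"

lemma Qf_append: "Qf bl y X (p @ l) = Qf bl y X p + Qf bl y (X \<union> set p) l"
  by (induction p arbitrary: X) auto

lemma Qf_cong: "(\<forall>z\<in>set l. y z = y' z) \<Longrightarrow> Qf bl y X l = Qf bl y' X l"
  by (induction l arbitrary: X) auto

lemma Qf_nth: "Qf bl y X r = (\<Sum>k<length r. y (r ! k) * (HH bl (X \<union> set (take (Suc k) r)) - HH bl (X \<union> set (take k r))))"
proof (induction r arbitrary: X)
  case Nil
  then show ?case by simp
next
  case (Cons a r)
  show ?case unfolding Qf.simps Cons.IH
    by (simp add: sum.lessThan_Suc_shift del: sum.lessThan_Suc)
qed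

lemma abel:
  fixes u c h :: "nat \<Rightarrow> real"
  assumes mono: "\<And>k. Suc k < n \<Longrightarrow> u (Suc k) \<le> u k"
    and le: "\<And>k. k \<le> n \<Longrightarrow> (\<Sum>j<k. c j) \<le> h k"
    and h0: "h 0 = 0" and hn: "(\<Sum>j<n. c j) = h n"
  shows "(\<Sum>j<n. u j * c j) \<le> (\<Sum>j<n. u j * (h (Suc j) - h j))"
proof -
  define d where "d k = h k - (\<Sum>j<k. c j)" for k
  have dpos: "k \<le> n \<Longrightarrow> 0 \<le> d k" for k using le[of k] unfolding d_def by simp
  have d0: "d 0 = 0" unfolding d_def using h0 by simp
  have dn: "d n = 0" unfolding d_def using hn by simp
  have claim: "1 \<le> m \<Longrightarrow> m \<le> n \<Longrightarrow> u (m - 1) * d m \<le> (\<Sum>j<m. u j * (d (Suc j) - d j))" for m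
  proof (induction m)
    case 0
    then show ?case by simp
  next
    case (Suc m)
    show ?case
    proof (cases "m = 0")
      case True
      then show ?thesis using d0 by simp
    next
      case False
      have ih: "u (m - 1) * d m \<le> (\<Sum>j<m. u j * (d (Suc j) - d j))"
        using Suc False by simp
      have "u m \<le> u (m - 1)" using mono[of "m - 1"] False Suc.prems by simp
      then have "u m * d m \<le> u (m - 1) * d m" using dpos[of m] Suc.prems
        by (simp add: mult_right_mono)
      then show ?thesis using ih by (simp add: algebra_simps)
    qed
  qed
  have "0 \<le> (\<Sum>j<n. u j * (d (Suc j) - d j))"
  proof (cases n)
    case 0
    then show ?thesis by simp
  next
    case (Suc n')
    then show ?thesis using claim[of n] dn by simp
  qed
  also have "(\<Sum>j<n. u j * (d (Suc j) - d j)) = (\<Sum>j<n. u j * (h (Suc j) - h j)) - (\<Sum>j<n. u j * c j)"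
    unfolding d_def by (simp add: algebra_simps sum_subtractf sum.distrib)
  finally show ?thesis by simp
qed


lemma upper:
  fixes x :: "'a::finite \<Rightarrow> real"
  assumes ir: "initial_row bl x r0" and vs: "valid_strategy s"
  shows "blue_total bl (run_strategy s x) \<le> Qf bl x {} r0"
proof -
  have d: "distinct r0" and U: "set r0 = UNIV"
    and sw: "sorted_wrt (\<lambda>a b. x a > x b \<or> (x a = x b \<and> (bl a \<or> \<not> bl b))) r0"
    using ir unfolding initial_row_def by auto
  define c where "c b = blue_total bl (run_strategy s (ind {b}))" for b
  define n where "n = length r0"
  define h where "h k = HH bl (set (take k r0))" for k
  have "blue_total bl (run_strategy s x) = (\<Sum>b\<in>UNIV. x b * c b)"
    unfolding c_def by (rule bt_decomp)
  also have "\<dots> = (\<Sum>k<n. x (r0 ! k) * c (r0 ! k))"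
    using sum_idx[OF d, of "\<lambda>b. x b * c b"] U unfolding n_def by simp
  also have "\<dots> \<le> (\<Sum>k<n. x (r0 ! k) * (h (Suc k) - h k))"
  proof (rule abel)
    fix k assume "Suc k < n"
    then have "(\<lambda>a b. x a > x b \<or> (x a = x b \<and> (bl a \<or> \<not> bl b))) (r0 ! k) (r0 ! Suc k)"
      using sw unfolding sorted_wrt_iff_nth_less n_def by blast
    then show "x (r0 ! Suc k) \<le> x (r0 ! k)" by auto
  next
    fix k assume kn: "k \<le> n"
    have "(\<Sum>j<k. c (r0 ! j)) = (\<Sum>b\<in>set (take k r0). c b)"
      using sum_idx[of "take k r0" c] d kn unfolding n_def by (simp add: min_def)
    also have "\<dots> = blue_total bl (run_strategy s (ind (set (take k r0))))"
      unfolding c_def by (rule bt_ind_sum[symmetric])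
    also have "\<dots> \<le> h k" unfolding h_def by (rule strat_bound[OF vs])
    finally show "(\<Sum>j<k. c (r0 ! j)) \<le> h k" .
  next
    show "h 0 = 0" unfolding h_def using HH_empty by simp
  next
    have "(\<Sum>j<n. c (r0 ! j)) = (\<Sum>b\<in>UNIV. c b)"
      using sum_idx[OF d, of c] U unfolding n_def by simp
    also have "\<dots> = blue_total bl (run_strategy s (ind UNIV))"
      unfolding c_def by (rule bt_ind_sum[symmetric])
    also have "ind UNIV = (\<lambda>a. 1)" unfolding ind_def by auto
    also have "blue_total bl (run_strategy s (\<lambda>a. 1)) = real (nb bl UNIV)"
      unfolding run_const blue_total_def nb_def by simp
    also have "\<dots> = h n" unfolding h_def n_def using U HH_UNIV[of bl] by simp
    finally show "(\<Sum>j<n. c (r0 ! j)) = h n" .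
  qed
  also have "\<dots> = Qf bl x {} r0"
    unfolding Qf_nth h_def n_def by simp
  finally show ?thesis .
qed


lemma step_decomp:
  assumes "proc_step bl s s'"
  shows "\<exists>p a b t. fst s = p @ a # b # t \<and> fst s' = p @ b # a # t \<and> \<not> bl a \<and> bl b
     \<and> snd s' = equil a b (snd s)"
proof -
  obtain i where i: "Suc i < length (fst s)" "\<not> bl (fst s ! i)" "bl (fst s ! Suc i)"
    "snd s' = equil (fst s ! i) (fst s ! Suc i) (snd s)"
    "fst s' = (fst s)[i := fst s ! Suc i, Suc i := fst s ! i]"
    using assms unfolding proc_step_def by blast
  define r where "r = fst s"
  define p where "p = take i r"
  define t where "t = drop (Suc (Suc i)) r"
  have lp: "length p = i" using i(1) unfolding p_def r_def by simp
  have r: "r = p @ r ! i # r ! Suc i # t"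
    unfolding p_def t_def using i(1) unfolding r_def
    by (metis Cons_nth_drop_Suc Suc_lessD append_take_drop_id)
  have "r[i := r ! Suc i, Suc i := r ! i] = p @ r ! Suc i # r ! i # t"
    apply (subst (1) r) using lp by (simp add: list_update_append)
  then show ?thesis using i r unfolding r_def by metis
qed

fun ninv :: "('a \<Rightarrow> bool) \<Rightarrow> 'a list \<Rightarrow> nat" where
  "ninv bl [] = 0"
| "ninv bl (a # r) = (if bl a then 0 else length (filter bl r)) + ninv bl r"

lemma ninv_append: "ninv bl (p @ l) = ninv bl p + ninv bl l + length (filter (\<lambda>z. \<not> bl z) p) * length (filter bl l)"
  by (induction p) auto

lemma ninv_swap: "\<not> bl a \<Longrightarrow> bl b \<Longrightarrow> ninv bl (p @ b # a # t) < ninv bl (p @ a # b # t)"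
  by (simp add: ninv_append)

lemma no_inf:
  "\<nexists>f. f 0 = (r0, x) \<and> (\<forall>n. proc_step bl (f n) (f (Suc n)))"
proof
  assume "\<exists>f. f 0 = (r0, x) \<and> (\<forall>n. proc_step bl (f n) (f (Suc n)))"
  then obtain f where f: "\<forall>n. proc_step bl (f n) (f (Suc n))" by blast
  have dec: "ninv bl (fst (f (Suc n))) < ninv bl (fst (f n))" for n
    using step_decomp[OF f[rule_format, of n]] ninv_swap by force
  have "ninv bl (fst (f n)) + n \<le> ninv bl (fst (f 0))" for n
  proof (induction n)
    case 0 then show ?case by simp
  next
    case (Suc n) then show ?case using dec[of n] by simp
  qed
  from this[of "Suc (ninv bl (fst (f 0)))"] show False by simp
qed

lemma equil_at: "equil a b y a = (y a + y b) / 2" "equil a b y b = (y a + y b) / 2"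
  "z \<noteq> a \<Longrightarrow> z \<noteq> b \<Longrightarrow> equil a b y z = y z"
  unfolding equil_def by auto

lemma Qf_swap:
  assumes d: "distinct (p @ a # b # t)" and ab: "\<not> bl a" "bl b"
  shows "Qf bl (equil a b y) {} (p @ b # a # t) = Qf bl y {} (p @ a # b # t)"
proof -
  define Z where "Z = set p"
  have aZ: "a \<notin> Z" "b \<notin> Z" "a \<noteq> b" using d unfolding Z_def by auto
  have c1: "Qf bl (equil a b y) {} p = Qf bl y {} p"
    by (rule Qf_cong) (use d in \<open>fastforce intro: equil_at(3)\<close>)
  have c2: "Qf bl (equil a b y) (insert a (insert b Z)) t = Qf bl y (insert a (insert b Z)) t"
    by (rule Qf_cong) (use d in \<open>fastforce intro: equil_at(3)\<close>)
  have sw: "2 * HH bl (insert a Z) = HH bl Z + HH bl (insert b (insert a Z))"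
    by (rule HH_swap[OF ab aZ(1,2)])
  have ic: "insert b (insert a Z) = insert a (insert b Z)" by auto
  have sw': "HH bl (insert a Z) = (HH bl Z + HH bl (insert a (insert b Z))) / 2"
    using sw ic by simp
  have L: "Qf bl (equil a b y) {} (p @ b # a # t) = Qf bl (equil a b y) {} p
     + (equil a b y b * (HH bl (insert b Z) - HH bl Z)
        + equil a b y a * (HH bl (insert a (insert b Z)) - HH bl (insert b Z))
        + Qf bl (equil a b y) (insert a (insert b Z)) t)"
    unfolding Qf_append Z_def by simp
  have R: "Qf bl y {} (p @ a # b # t) = Qf bl y {} p
     + (y a * (HH bl (insert a Z) - HH bl Z)
        + y b * (HH bl (insert b (insert a Z)) - HH bl (insert a Z))
        + Qf bl y (insert b (insert a Z)) t)"
    unfolding Qf_append Z_def by simp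
  have ar: "\<And>ya yb H0 H2 Hb::real.
     (ya + yb) / 2 * (Hb - H0) + (ya + yb) / 2 * (H2 - Hb) = ya * ((H0 + H2) / 2 - H0) + yb * (H2 - (H0 + H2) / 2)"
    by (simp add: field_simps)
  have q: "Qf bl (equil a b y) (insert a (insert b Z)) t = Qf bl y (insert b (insert a Z)) t"
    using c2 ic by simp
  have e: "equil a b y b * (HH bl (insert b Z) - HH bl Z)
        + equil a b y a * (HH bl (insert a (insert b Z)) - HH bl (insert b Z))
     = y a * (HH bl (insert a Z) - HH bl Z)
        + y b * (HH bl (insert b (insert a Z)) - HH bl (insert a Z))"
    unfolding equil_at(1,2) sw' ic by (rule ar)
  show ?thesis using L R c1 q e by linarith
qed


lemma terminal_split:
  assumes "\<not> red_left_of_blue bl r"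
  shows "\<exists>p t. r = p @ t \<and> (\<forall>z\<in>set p. bl z) \<and> (\<forall>z\<in>set t. \<not> bl z)"
proof -
  define p where "p = takeWhile bl r"
  define t where "t = dropWhile bl r"
  have r: "r = p @ t" unfolding p_def t_def by simp
  have pb: "\<forall>z\<in>set p. bl z" unfolding p_def by (auto dest: set_takeWhileD)
  have "\<forall>z\<in>set t. \<not> bl z"
  proof (rule ccontr)
    assume "\<not> (\<forall>z\<in>set t. \<not> bl z)"
    then obtain z where z: "z \<in> set t" "bl z" by blast
    then have tne: "t \<noteq> []" by auto
    have h: "\<not> bl (t ! 0)" using hd_dropWhile[of bl r] tne unfolding t_def by (simp add: hd_conv_nth)
    obtain j where j: "j < length t" "t ! j = z" using z(1) by (auto simp: in_set_conv_nth)
    have j0: "0 < j" using j z(2) h by (cases j) auto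
    have "red_left_of_blue bl r"
      unfolding red_left_of_blue_def
      apply (rule exI[of _ "length p"], rule exI[of _ "length p + j"])
      using j j0 h z(2) r by (simp add: nth_append)
    then show False using assms by simp
  qed
  then show ?thesis using r pb by blast
qed

lemma Qf_blue:
  "\<forall>z\<in>set p. bl z \<Longrightarrow> \<forall>z\<in>X. bl z \<Longrightarrow> distinct p \<Longrightarrow> set p \<inter> X = {}
   \<Longrightarrow> Qf bl y X p = (\<Sum>z\<in>set p. y z)"
proof (induction p arbitrary: X)
  case Nil
  then show ?case by simp
next
  case (Cons a p)
  have ba: "bl a" and aX: "a \<notin> X" using Cons.prems by auto
  have nrX: "nr bl X = 0" unfolding nr_def using Cons.prems(2) by auto
  have "HH bl (insert a X) - HH bl X = 1"
    unfolding HH_def using nrX ba aX by (simp add: nb_ins_blue nr_ins_blue)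
  moreover have "Qf bl y (insert a X) p = (\<Sum>z\<in>set p. y z)"
    using Cons.prems by (intro Cons.IH) auto
  ultimately show ?case using Cons.prems by simp
qed

lemma Qf_red:
  "\<forall>z\<in>set t. \<not> bl z \<Longrightarrow> {z. bl z} \<subseteq> X \<Longrightarrow> Qf bl y X t = 0"
proof (induction t arbitrary: X)
  case Nil
  then show ?case by simp
next
  case (Cons a t)
  have full: "HH bl T = nb bl UNIV" if "{z. bl z} \<subseteq> T" for T
  proof -
    have "{z\<in>T. bl z} = {z\<in>UNIV. bl z}" using that by auto
    then have "nb bl T = nb bl UNIV" unfolding nb_def by simp
    then show ?thesis unfolding HH_def by simp
  qed
  have "HH bl (insert a X) - HH bl X = 0" using full[of X] full[of "insert a X"] Cons.prems by auto
  moreover have "Qf bl y (insert a X) t = 0" using Cons.prems by (intro Cons.IH) auto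
  ultimately show ?case by simp
qed

lemma terminal_Q:
  assumes d: "distinct r" and U: "set r = UNIV" and nr: "\<not> red_left_of_blue bl r"
  shows "Qf bl y {} r = blue_total bl y"
proof -
  obtain p t where r: "r = p @ t" and pb: "\<forall>z\<in>set p. bl z" and tr: "\<forall>z\<in>set t. \<not> bl z"
    using terminal_split[OF nr] by blast
  have sp: "set p = {z. bl z}"
  proof
    show "set p \<subseteq> {z. bl z}" using pb by auto
    show "{z. bl z} \<subseteq> set p" using U tr r by auto
  qed
  have "Qf bl y {} r = Qf bl y {} p + Qf bl y (set p) t" unfolding r Qf_append by simp
  also have "Qf bl y {} p = (\<Sum>z\<in>set p. y z)" using d r pb by (intro Qf_blue) auto
  also have "Qf bl y (set p) t = 0" using tr sp by (intro Qf_red) auto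
  finally show ?thesis unfolding blue_total_def sp by simp
qed

lemma reach_inv:
  assumes "(proc_step bl)\<^sup>*\<^sup>* (r0, x) s" "distinct r0" "set r0 = UNIV"
  shows "distinct (fst s) \<and> set (fst s) = UNIV \<and> Qf bl (snd s) {} (fst s) = Qf bl x {} r0"
  using assms(1)
proof (induction rule: rtranclp_induct)
  case base
  then show ?case using assms by simp
next
  case (step s s')
  obtain p a b t where st: "fst s = p @ a # b # t" "fst s' = p @ b # a # t" "\<not> bl a" "bl b"
    "snd s' = equil a b (snd s)" using step_decomp[OF step.hyps(2)] by blast
  have d: "distinct (p @ a # b # t)" using step.IH st by simp
  have "distinct (fst s')" using d st by auto
  moreover have "set (fst s') = UNIV" using step.IH st by auto
  moreover have "Qf bl (snd s') {} (fst s') = Qf bl (snd s) {} (fst s)"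
    using Qf_swap[OF d st(3,4)] st by simp
  ultimately show ?case using step.IH by simp
qed

theorem mainTheorem3:
  fixes blue :: "'a::finite \<Rightarrow> bool" and x :: "'a \<Rightarrow> real" and r0 :: "'a list"
  assumes "initial_row blue x r0"
  shows "(\<nexists>f. f 0 = (r0, x) \<and> (\<forall>n. proc_step blue (f n) (f (Suc n))))
    \<and> (\<forall>s. (proc_step blue)\<^sup>*\<^sup>* (r0, x) s \<and> \<not> red_left_of_blue blue (fst s) \<longrightarrow>
         (\<forall>strat. valid_strategy strat \<longrightarrow>
            blue_total blue (run_strategy strat x) \<le> blue_total blue (snd s)))"
proof (intro conjI allI impI)
  show "\<nexists>f. f 0 = (r0, x) \<and> (\<forall>n. proc_step blue (f n) (f (Suc n)))" by (rule no_inf)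
next
  fix s :: "'a list \<times> ('a \<Rightarrow> real)" and strat :: "('a \<times> 'a) list"
  assume h: "(proc_step blue)\<^sup>*\<^sup>* (r0, x) s \<and> \<not> red_left_of_blue blue (fst s)"
    and vs: "valid_strategy strat"
  have d: "distinct r0" and U: "set r0 = UNIV" using assms unfolding initial_row_def by auto
  have inv: "distinct (fst s)" "set (fst s) = UNIV" "Qf blue (snd s) {} (fst s) = Qf blue x {} r0"
    using reach_inv[OF conjunct1[OF h] d U] by auto
  have "blue_total blue (run_strategy strat x) \<le> Qf blue x {} r0"
    by (rule upper[OF assms vs])
  also have "\<dots> = Qf blue (snd s) {} (fst s)" using inv by simp
  also have "\<dots> = blue_total blue (snd s)"
    using terminal_Q[OF inv(1,2)] h by simp
  finally show "blue_total blue (run_strategy strat x) \<le> blue_total blue (snd s)" .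
qed

end
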